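(* Let $\kappa$ be a maximal clique of the IDNC graph $\mathcal G$ chosen for transmission at time $t$, with all quantities without time index denoting their values at time $t$. For a receiver $i\in\mathcal T(\kappa)$, the expected primary degree of a vertex of receiver $i$ at time $t+1$ is \[ \mathbb E\big[\Delta_{i}^{(t+1)}\big]=\mathbb E\big[\Delta_i^{(t)}\big]+\alpha_i, \] and for a receiver $i\notin\mathcal T(\kappa)$ it is \[ \mathbb E\big[\Delta_{i}^{(t+1)}\big]=\mathbb E\big[\Delta_i^{(t)}\big]+\beta_i, \] where \[ \alpha_i=\sum_{k\ne i} q_i\xi_k-\sum_{k\in\mathcal T_\rho(\kappa),k\ne i}\Phi_{ik}(q_i)+\sum_{k\in\mathcal T_\sigma(\kappa),k\ne i}\Lambda_{ik}(q_i),\qquad \beta_i=-\sum_{k\in\mathcal T_\rho(\kappa),k\ne i}\Phi_{ik}(0)+\sum_{k\in\mathcal T_\sigma(\kappa),k\ne i}\Lambda_{ik}(0), \] \[ \Phi_{ik}(x)=\frac{q_k}{N}\Big(1+\frac{(\varrho_k-\psi_k+1)(\varrho_i+x)}{N-1}\Big),\quad \Lambda_{ik}(x)=\frac{q_k\psi_k(\varrho_i+x)}{N(N-1)},\quad \xi_k=\frac{\psi_k\varrho_k}{N(N-1)}, \] with the sum over $k\ne i$ ranging over $k\in\{1,\dots,M\}$.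
   Context: A sender holds a frame $\mathcal N$ of $N\ge2$ packets and serves receivers $\mathcal M=\{1,\dots,M\}$. For each receiver $i$ there are sets $\mathcal H_i\subseteq\mathcal N$ (Has set), $\mathcal L_i=\mathcal N\setminus\mathcal H_i$ (Lacks set) and $\mathcal W_i\subseteq\mathcal L_i$ (Wants set), with cardinalities $\varrho_i=|\mathcal H_i|$, $\psi_i=|\mathcal W_i|$. Receiver $i$ has packet success probability $q_i\in[0,1]$. The IDNC graph $\mathcal G$ has a primary vertex $v_{ij}$ for each $i\in\mathcal M$, $j\in\mathcal W_i$, and a secondary vertex $v_{ij}$ for each $i\in\mathcal M$, $j\in\mathcal L_i\setminus\mathcal W_i$; two distinct vertices $v_{ij},v_{kl}$ are adjacent iff (C1) $j=l$, or (C2) $j\in\mathcal H_k$ and $l\in\mathcal H_i$. The primary graph is the subgraph induced by primary vertices; primary degree means degree in it. For a maximal clique $\kappa$ of $\mathcal G$, $\mathcal T_\rho(\kappa)$ (resp. $\mathcal T_\sigma(\kappa)$) is the set of receivers having a primary (resp. secondary) vertex in $\kappa$, and $\mathcal T(\kappa)=\mathcal T_\rho(\kappa)\cup\mathcal T_\sigma(\kappa)$. Transmission model: when $\kappa$ is transmitted at time $t$, each $k\in\mathcal T(\kappa)$ receives it with probability $q_k$, independently; let $X_k\in\{0,1\}$ be the reception indicator. At time $t+1$ the cardinalities become $\varrho_k'=\varrho_k+X_k$ for $k\in\mathcal T(\kappa)$, $\psi_k'=\psi_k-X_k$ for $k\in\mathcal T_\rho(\kappa)$, and are otherwise unchanged.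 Expected degrees are computed ignoring set contents (sets treated as uniformly random given their cardinalities): for cardinality vectors $\boldsymbol\varrho,\boldsymbol\psi$, the expected primary degree of a vertex of receiver $i$ is $D_i(\boldsymbol\varrho,\boldsymbol\psi)=\sum_{k\ne i}\frac{\psi_k}{N}\big(1+\frac{\varrho_k\varrho_i}{N-1}\big)$. Thus $\mathbb E[\Delta_i^{(t)}]=D_i(\boldsymbol\varrho,\boldsymbol\psi)$ and $\mathbb E[\Delta_i^{(t+1)}]=\mathbb E_X\big[D_i(\boldsymbol\varrho',\boldsymbol\psi')\big]$, the expectation over the independent receptions. *)

theory Defs
  imports "HOL-Probability.Probability"
begin

text \<open>Packets are 1..N, receivers are 1..M. A vertex v_ij is the pair (i,j).\<close>

definition Lacks :: "nat \<Rightarrow> (nat \<Rightarrow> nat set) \<Rightarrow> nat \<Rightarrow> nat set" where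
  "Lacks N H i = {1..N} - H i"

definition primary_vertices :: "nat \<Rightarrow> (nat \<Rightarrow> nat set) \<Rightarrow> (nat \<times> nat) set" where
  "primary_vertices M W = {(i,j). i \<in> {1..M} \<and> j \<in> W i}"

definition secondary_vertices ::
  "nat \<Rightarrow> nat \<Rightarrow> (nat \<Rightarrow> nat set) \<Rightarrow> (nat \<Rightarrow> nat set) \<Rightarrow> (nat \<times> nat) set" where
  "secondary_vertices N M H W = {(i,j). i \<in> {1..M} \<and> j \<in> Lacks N H i - W i}"

definition idnc_vertices ::
  "nat \<Rightarrow> nat \<Rightarrow> (nat \<Rightarrow> nat set) \<Rightarrow> (nat \<Rightarrow> nat set) \<Rightarrow> (nat \<times> nat) set" where
  "idnc_vertices N M H W = primary_vertices M W \<union> secondary_vertices N M H W"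

definition idnc_adj :: "(nat \<Rightarrow> nat set) \<Rightarrow> nat \<times> nat \<Rightarrow> nat \<times> nat \<Rightarrow> bool" where
  "idnc_adj H v w = (v \<noteq> w \<and> (snd v = snd w \<or> (snd v \<in> H (fst w) \<and> snd w \<in> H (fst v))))"

definition idnc_clique ::
  "nat \<Rightarrow> nat \<Rightarrow> (nat \<Rightarrow> nat set) \<Rightarrow> (nat \<Rightarrow> nat set) \<Rightarrow> (nat \<times> nat) set \<Rightarrow> bool" where
  "idnc_clique N M H W K = (K \<subseteq> idnc_vertices N M H W \<and>
      (\<forall>v\<in>K. \<forall>w\<in>K. v \<noteq> w \<longrightarrow> idnc_adj H v w))"

definition maximal_clique ::
  "nat \<Rightarrow> nat \<Rightarrow> (nat \<Rightarrow> nat set) \<Rightarrow> (nat \<Rightarrow> nat set) \<Rightarrow> (nat \<times> nat) set \<Rightarrow> bool" where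
  "maximal_clique N M H W K = (idnc_clique N M H W K \<and>
      (\<forall>K'. idnc_clique N M H W K' \<and> K \<subseteq> K' \<longrightarrow> K' = K))"

definition T_rho :: "nat \<Rightarrow> (nat \<Rightarrow> nat set) \<Rightarrow> (nat \<times> nat) set \<Rightarrow> nat set" where
  "T_rho M W K = {i. \<exists>j. (i,j) \<in> K \<and> (i,j) \<in> primary_vertices M W}"

definition T_sigma ::
  "nat \<Rightarrow> nat \<Rightarrow> (nat \<Rightarrow> nat set) \<Rightarrow> (nat \<Rightarrow> nat set) \<Rightarrow> (nat \<times> nat) set \<Rightarrow> nat set" where
  "T_sigma N M H W K = {i. \<exists>j. (i,j) \<in> K \<and> (i,j) \<in> secondary_vertices N M H W}"

definition T_all ::
  "nat \<Rightarrow> nat \<Rightarrow> (nat \<Rightarrow> nat set) \<Rightarrow> (nat \<Rightarrow> nat set) \<Rightarrow> (nat \<times> nat) set \<Rightarrow> nat set" where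
  "T_all N M H W K = T_rho M W K \<union> T_sigma N M H W K"

text \<open>Expected primary degree of a vertex of receiver i for cardinality vectors rho, psi.\<close>
definition D_exp :: "nat \<Rightarrow> nat \<Rightarrow> (nat \<Rightarrow> real) \<Rightarrow> (nat \<Rightarrow> real) \<Rightarrow> nat \<Rightarrow> real" where
  "D_exp N M rho psi i =
     (\<Sum>k\<in>{1..M} - {i}. psi k / real N * (1 + rho k * rho i / (real N - 1)))"

definition reception_pmf :: "nat set \<Rightarrow> (nat \<Rightarrow> real) \<Rightarrow> (nat \<Rightarrow> bool) pmf" where
  "reception_pmf T q = Pi_pmf T False (\<lambda>k. bernoulli_pmf (q k))"

definition rho_next :: "nat set \<Rightarrow> (nat \<Rightarrow> real) \<Rightarrow> (nat \<Rightarrow> bool) \<Rightarrow> nat \<Rightarrow> real" where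
  "rho_next T rho X k = (if k \<in> T then rho k + of_bool (X k) else rho k)"

definition psi_next :: "nat set \<Rightarrow> (nat \<Rightarrow> real) \<Rightarrow> (nat \<Rightarrow> bool) \<Rightarrow> nat \<Rightarrow> real" where
  "psi_next Tr psi X k = (if k \<in> Tr then psi k - of_bool (X k) else psi k)"

definition Phi :: "nat \<Rightarrow> (nat \<Rightarrow> real) \<Rightarrow> (nat \<Rightarrow> real) \<Rightarrow> (nat \<Rightarrow> real) \<Rightarrow> nat \<Rightarrow> nat \<Rightarrow> real \<Rightarrow> real" where
  "Phi N q rho psi i k x =
     q k / real N * (1 + (rho k - psi k + 1) * (rho i + x) / (real N - 1))"

definition Lambda :: "nat \<Rightarrow> (nat \<Rightarrow> real) \<Rightarrow> (nat \<Rightarrow> real) \<Rightarrow> (nat \<Rightarrow> real) \<Rightarrow> nat \<Rightarrow> nat \<Rightarrow> real \<Rightarrow> real" where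
  "Lambda N q rho psi i k x = q k * psi k * (rho i + x) / (real N * (real N - 1))"

definition xi :: "nat \<Rightarrow> (nat \<Rightarrow> real) \<Rightarrow> (nat \<Rightarrow> real) \<Rightarrow> nat \<Rightarrow> real" where
  "xi N rho psi k = psi k * rho k / (real N * (real N - 1))"

end

theory Submission
  imports Defs
begin

lemma fin_int:
  assumes "finite T"
  shows "integrable (measure_pmf (reception_pmf T q)) (f :: _ \<Rightarrow> real)"
proof (rule integrable_measure_pmf_finite)
  show "finite (set_pmf (reception_pmf T q))"
    unfolding reception_pmf_def using assms by (subst set_Pi_pmf) auto
qed

lemma exp_one:
  assumes "finite T" "\<forall>k\<in>T. 0 \<le> q k \<and> q k \<le> 1"
  shows "measure_pmf.expectation (reception_pmf T q) (\<lambda>X. of_bool (X k) :: real)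
       = (if k \<in> T then q k else 0)"
proof -
  have "measure_pmf.expectation (reception_pmf T q) (\<lambda>X. of_bool (X k) :: real)
     = measure_pmf.expectation (map_pmf (\<lambda>f. f k) (reception_pmf T q)) (\<lambda>b. of_bool b :: real)"
    by simp
  also have "\<dots> = (if k \<in> T then q k else 0)"
    unfolding reception_pmf_def using assms by (subst Pi_pmf_component) auto
  finally show ?thesis .
qed

lemma exp_two:
  assumes "finite T" "\<forall>k\<in>T. 0 \<le> q k \<and> q k \<le> 1" "k \<noteq> i"
  shows "measure_pmf.expectation (reception_pmf T q) (\<lambda>X. of_bool (X k) * of_bool (X i) :: real)
       = (if k \<in> T then q k else 0) * (if i \<in> T then q i else 0)"
proof (cases "k \<in> T \<and> i \<in> T")
  case True
  define g where "g = (\<lambda>x (v::bool). if x \<in> {k,i} then of_bool v else (1::real))"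
  have eq: "(\<lambda>X. of_bool (X k) * of_bool (X i) :: real) = (\<lambda>X. \<Prod>x\<in>T. g x (X x))"
  proof
    fix X :: "nat \<Rightarrow> bool"
    have "(\<Prod>x\<in>T. g x (X x)) = (\<Prod>x\<in>{k,i}. g x (X x))"
      using True assms(1) by (intro prod.mono_neutral_right) (auto simp: g_def)
    also have "\<dots> = of_bool (X k) * of_bool (X i)" using assms(3) by (simp add: g_def)
    finally show "of_bool (X k) * of_bool (X i) = (\<Prod>x\<in>T. g x (X x))" by simp
  qed
  have "measure_pmf.expectation (reception_pmf T q) (\<lambda>X. \<Prod>x\<in>T. g x (X x))
     = (\<Prod>x\<in>T. measure_pmf.expectation (bernoulli_pmf (q x)) (g x))"
    unfolding reception_pmf_def using assms(1)
    by (intro expectation_prod_Pi_pmf) (auto simp: g_def intro: integrable_measure_pmf_finite)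
  also have "\<dots> = (\<Prod>x\<in>{k,i}. measure_pmf.expectation (bernoulli_pmf (q x)) (g x))"
  proof -
    have "\<forall>x\<in>T - {k,i}. measure_pmf.expectation (bernoulli_pmf (q x)) (g x) = 1"
    proof
      fix x assume "x \<in> T - {k,i}"
      then have "g x = (\<lambda>v. 1)" by (auto simp: g_def)
      then show "measure_pmf.expectation (bernoulli_pmf (q x)) (g x) = 1" by simp
    qed
    moreover have "{k,i} \<subseteq> T" using True by auto
    ultimately show ?thesis using prod.mono_neutral_right[OF assms(1), of "{k,i}" "\<lambda>x. measure_pmf.expectation (bernoulli_pmf (q x)) (g x)"] by simp
  qed
  also have "\<dots> = q k * q i" using True assms by (simp add: g_def)
  finally show ?thesis using eq True by simp
next
  case False
  have "AE X in measure_pmf (reception_pmf T q). of_bool (X k) * of_bool (X i) = (0::real)"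
  proof (rule AE_pmfI)
    fix X assume "X \<in> set_pmf (reception_pmf T q)"
    then have "\<forall>x. x \<notin> T \<longrightarrow> X x = False"
      using set_Pi_pmf_subset[OF assms(1), of False "\<lambda>k. bernoulli_pmf (q k)"] unfolding reception_pmf_def by blast
    then show "of_bool (X k) * of_bool (X i) = (0::real)" using False by auto
  qed
  then have "measure_pmf.expectation (reception_pmf T q) (\<lambda>X. of_bool (X k) * of_bool (X i) :: real) =
     measure_pmf.expectation (reception_pmf T q) (\<lambda>X. 0)"
    by (intro integral_cong_AE) auto
  then show ?thesis using False by auto
qed

lemma ptl:
  fixes n ps r ri :: real
  assumes "n \<noteq> 0" "n - 1 \<noteq> 0"
  shows "(ps - of_bool B * of_bool X) / n * (1 + (r + of_bool A * of_bool X) * (ri + of_bool AI * of_bool Y) / (n - 1))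
   = ps / n * (1 + r * ri / (n - 1))
     + (- of_bool B + (of_bool A * ps - of_bool B * r - of_bool A * of_bool B) * ri / (n - 1)) / n * of_bool X
     + ps * r * of_bool AI / (n * (n - 1)) * of_bool Y
     + (of_bool A * ps - of_bool B * r - of_bool A * of_bool B) * of_bool AI / (n * (n - 1)) * (of_bool X * of_bool Y)"
  unfolding divide_inverse inverse_mult_distrib
  by (cases A; cases B; cases X; cases Y; cases AI) (simp_all add: algebra_simps)

lemma lin_exp:
  assumes "finite T"
  shows "measure_pmf.expectation (reception_pmf T q)
     (\<lambda>X. c0 + c1 * of_bool (X k) + c2 * of_bool (X i) + c3 * (of_bool (X k) * of_bool (X i)))
   = c0 + c1 * measure_pmf.expectation (reception_pmf T q) (\<lambda>X. of_bool (X k))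
        + c2 * measure_pmf.expectation (reception_pmf T q) (\<lambda>X. of_bool (X i))
        + c3 * measure_pmf.expectation (reception_pmf T q) (\<lambda>X. of_bool (X k) * of_bool (X i) :: real)"
  using assms by (simp add: fin_int)

theorem theorem5:
  fixes N M :: nat and H W :: "nat \<Rightarrow> nat set" and q :: "nat \<Rightarrow> real"
    and K :: "(nat \<times> nat) set" and i :: nat
  defines "rho \<equiv> (\<lambda>k. real (card (H k)))"
      and "psi \<equiv> (\<lambda>k. real (card (W k)))"
      and "Tr \<equiv> T_rho M W K"
      and "Ts \<equiv> T_sigma N M H W K"
      and "T \<equiv> T_all N M H W K"
  assumes N2: "N \<ge> 2"
      and H_sub: "\<forall>k\<in>{1..M}. H k \<subseteq> {1..N}"
      and W_sub: "\<forall>k\<in>{1..M}. W k \<subseteq> Lacks N H k"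
      and q_prob: "\<forall>k\<in>{1..M}. 0 \<le> q k \<and> q k \<le> 1"
      and K_max: "maximal_clique N M H W K"
      and i_recv: "i \<in> {1..M}"
  shows
    "(i \<in> T \<longrightarrow>
       measure_pmf.expectation (reception_pmf T q)
         (\<lambda>X. D_exp N M (rho_next T rho X) (psi_next Tr psi X) i)
       = D_exp N M rho psi i +
         ((\<Sum>k\<in>{1..M} - {i}. q i * xi N rho psi k)
          - (\<Sum>k\<in>Tr - {i}. Phi N q rho psi i k (q i))
          + (\<Sum>k\<in>Ts - {i}. Lambda N q rho psi i k (q i))))
   \<and> (i \<notin> T \<longrightarrow>
       measure_pmf.expectation (reception_pmf T q)
         (\<lambda>X. D_exp N M (rho_next T rho X) (psi_next Tr psi X) i)
       = D_exp N M rho psi i +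
         (- (\<Sum>k\<in>Tr - {i}. Phi N q rho psi i k 0)
          + (\<Sum>k\<in>Ts - {i}. Lambda N q rho psi i k 0)))"
proof -
  have N0: "real N \<noteq> 0" "real N - 1 \<noteq> 0" using N2 by auto
  have Tr_sub: "Tr \<subseteq> {1..M}" by (auto simp: Tr_def T_rho_def primary_vertices_def)
  have Ts_sub: "Ts \<subseteq> {1..M}" by (auto simp: Ts_def T_sigma_def secondary_vertices_def)
  have T_eq: "T = Tr \<union> Ts" by (simp add: T_def Tr_def Ts_def T_all_def)
  have disj: "Tr \<inter> Ts = {}"
  proof (rule ccontr)
    assume "Tr \<inter> Ts \<noteq> {}"
    then obtain k j l where kj: "(k,j) \<in> K" "(k,j) \<in> primary_vertices M W"
      and kl: "(k,l) \<in> K" "(k,l) \<in> secondary_vertices N M H W"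
      by (auto simp: Tr_def Ts_def T_rho_def T_sigma_def)
    have k: "k \<in> {1..M}" "j \<in> W k" "l \<notin> W k" using kj kl
      by (auto simp: primary_vertices_def secondary_vertices_def)
    then have "j \<noteq> l" by auto
    have "j \<notin> H k" using W_sub k by (auto simp: Lacks_def)
    moreover have "idnc_adj H (k,j) (k,l)"
      using K_max kj kl \<open>j \<noteq> l\<close> unfolding maximal_clique_def idnc_clique_def by auto
    ultimately show False using \<open>j \<noteq> l\<close> by (auto simp: idnc_adj_def)
  qed
  have T_sub: "T \<subseteq> {1..M}" using T_eq Tr_sub Ts_sub by auto
  have finT: "finite T" using T_sub finite_subset by blast
  have qT: "\<forall>k\<in>T. 0 \<le> q k \<and> q k \<le> 1" using T_sub q_prob by auto
  define s where "s = (if i \<in> T then q i else 0)"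
  define P where "P = reception_pmf T q"
  have key: "measure_pmf.expectation P
      (\<lambda>X. psi_next Tr psi X k / real N * (1 + rho_next T rho X k * rho_next T rho X i / (real N - 1)))
    = psi k / real N * (1 + rho k * rho i / (real N - 1)) + s * xi N rho psi k
      - (if k \<in> Tr then Phi N q rho psi i k s else 0)
      + (if k \<in> Ts then Lambda N q rho psi i k s else 0)"
    if k: "k \<in> {1..M} - {i}" for k
  proof -
    define a where "a = (of_bool (k \<in> T) :: real)"
    define b where "b = (of_bool (k \<in> Tr) :: real)"
    define ai where "ai = (of_bool (i \<in> T) :: real)"
    define c1 where "c1 = (- b + (a * psi k - b * rho k - a * b) * rho i / (real N - 1)) / real N"
    define c2 where "c2 = psi k * rho k * ai / (real N * (real N - 1))"
    define c3 where "c3 = (a * psi k - b * rho k - a * b) * ai / (real N * (real N - 1))"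
    have pt: "(\<lambda>X. psi_next Tr psi X k / real N * (1 + rho_next T rho X k * rho_next T rho X i / (real N - 1)))
       = (\<lambda>X. psi k / real N * (1 + rho k * rho i / (real N - 1)) + c1 * of_bool (X k)
              + c2 * of_bool (X i) + c3 * (of_bool (X k) * of_bool (X i)))"
    proof
      fix X :: "nat \<Rightarrow> bool"
      have "psi_next Tr psi X k = psi k - of_bool (k \<in> Tr) * of_bool (X k)"
           "rho_next T rho X k = rho k + of_bool (k \<in> T) * of_bool (X k)"
           "rho_next T rho X i = rho i + of_bool (i \<in> T) * of_bool (X i)"
        by (auto simp: psi_next_def rho_next_def)
      then show "psi_next Tr psi X k / real N * (1 + rho_next T rho X k * rho_next T rho X i / (real N - 1))
       = psi k / real N * (1 + rho k * rho i / (real N - 1)) + c1 * of_bool (X k)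
              + c2 * of_bool (X i) + c3 * (of_bool (X k) * of_bool (X i))"
        unfolding c1_def c2_def c3_def a_def b_def ai_def
        using ptl[OF N0, of "psi k" "k \<in> Tr" "X k" "rho k" "k \<in> T" "rho i" "i \<in> T" "X i"]
        by simp
    qed
    have ki: "k \<noteq> i" using k by auto
    have E: "measure_pmf.expectation P
      (\<lambda>X. psi_next Tr psi X k / real N * (1 + rho_next T rho X k * rho_next T rho X i / (real N - 1)))
      = psi k / real N * (1 + rho k * rho i / (real N - 1)) + c1 * (if k \<in> T then q k else 0)
        + c2 * s + c3 * ((if k \<in> T then q k else 0) * s)"
      unfolding pt P_def lin_exp[OF finT] exp_one[OF finT qT] exp_two[OF finT qT ki] s_def by simp
    show ?thesis unfolding E
    proof -
      consider "k \<in> Tr" "k \<in> T" "k \<notin> Ts" | "k \<in> Ts" "k \<in> T" "k \<notin> Tr" | "k \<notin> T" "k \<notin> Tr" "k \<notin> Ts"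
        using T_eq disj by auto
      then show "psi k / real N * (1 + rho k * rho i / (real N - 1)) + c1 * (if k \<in> T then q k else 0)
        + c2 * s + c3 * ((if k \<in> T then q k else 0) * s) =
        psi k / real N * (1 + rho k * rho i / (real N - 1)) + s * xi N rho psi k
      - (if k \<in> Tr then Phi N q rho psi i k s else 0)
      + (if k \<in> Ts then Lambda N q rho psi i k s else 0)"
        unfolding c1_def c2_def c3_def a_def b_def ai_def s_def Phi_def Lambda_def xi_def
          divide_inverse inverse_mult_distrib
        by cases (cases "i \<in> T"; simp add: algebra_simps)+
    qed
  qed
  have sumE: "measure_pmf.expectation P (\<lambda>X. D_exp N M (rho_next T rho X) (psi_next Tr psi X) i)
     = (\<Sum>k\<in>{1..M} - {i}. psi k / real N * (1 + rho k * rho i / (real N - 1)) + s * xi N rho psi k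
      - (if k \<in> Tr then Phi N q rho psi i k s else 0)
      + (if k \<in> Ts then Lambda N q rho psi i k s else 0))"
    unfolding D_exp_def P_def
    apply (subst Bochner_Integration.integral_sum)
     apply (simp add: fin_int[OF finT])
    apply (rule sum.cong[OF refl])
    apply (rule key[unfolded P_def])
    apply assumption
    done
  have restr: "(\<Sum>k\<in>{1..M} - {i}. (if k \<in> S then f k else 0)) = (\<Sum>k\<in>S - {i}. f k)"
    if "S \<subseteq> {1..M}" for S and f :: "nat \<Rightarrow> real"
  proof -
    have "S - {i} = ({1..M} - {i}) \<inter> S" using that by auto
    then show ?thesis by (simp add: sum.inter_restrict)
  qed
  have total: "measure_pmf.expectation P (\<lambda>X. D_exp N M (rho_next T rho X) (psi_next Tr psi X) i)
     = D_exp N M rho psi i + ((\<Sum>k\<in>{1..M} - {i}. s * xi N rho psi k)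
          - (\<Sum>k\<in>Tr - {i}. Phi N q rho psi i k s)
          + (\<Sum>k\<in>Ts - {i}. Lambda N q rho psi i k s))"
    apply (subst sumE)
    unfolding D_exp_def restr[OF Tr_sub, symmetric] restr[OF Ts_sub, symmetric]
    by (simp add: sum.distrib sum_subtractf)
  show ?thesis using total unfolding P_def s_def by auto
qed

end
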